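(* Let $A=\Bbbk_{-1}[u,v]$ and $G=G_{n,k}$, where $n,k$ are positive coprime integers with $k\not\equiv2\pmod4$. Then the invariant ring $A^G$ is commutative if and only if $n$ or $k$ is even.
   Context: $\Bbbk$ is algebraically closed of characteristic $0$; $\Bbbk_{-1}[u,v]=\Bbbk\langle u,v\rangle/(vu+uv)$; matrices $\begin{pmatrix}a&b\\c&d\end{pmatrix}$ act by $u\mapsto au+cv$, $v\mapsto bu+dv$. With $\omega$ a primitive $(2nk)$th root of unity, $G_{n,k}$ is generated by $\mathrm{diag}(\omega^{2k},\omega^{-2k})$ and $\begin{pmatrix}0&\omega^n\\\omega^n&0\end{pmatrix}$. $A^G=\{a\in A: g\cdot a=a\ \forall g\in G\}$. *)

theory Defs
  imports "HOL-Computational_Algebra.Polynomial"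
begin

text \<open>The skew polynomial ring k_{-1}[u,v], modelled on its monomial basis u^i v^j:
  an element is a finitely supported coefficient function on pairs (i,j).\<close>

type_synonym 'a skp = "nat \<times> nat \<Rightarrow> 'a"

definition skA :: "'a::comm_ring_1 skp set" where
  "skA = {f. finite {p. f p \<noteq> 0}}"

text \<open>(u^a v^b)(u^c v^d) = (-1)^(b c) u^(a+c) v^(b+d), since vu = -uv.\<close>
definition skmul :: "'a::comm_ring_1 skp \<Rightarrow> 'a skp \<Rightarrow> 'a skp" where
  "skmul f g = (\<lambda>p. \<Sum>q\<in>{0..fst p}\<times>{0..snd p}.
      (-1) ^ (snd q * (fst p - fst q)) * f q * g (fst p - fst q, snd p - snd q))"

definition skone :: "'a::comm_ring_1 skp" where
  "skone = (\<lambda>p. if p = (0,0) then 1 else 0)"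

definition skpow :: "'a::comm_ring_1 skp \<Rightarrow> nat \<Rightarrow> 'a skp" where
  "skpow f m = ((\<lambda>h. skmul f h) ^^ m) skone"

definition sklin :: "'a::comm_ring_1 \<Rightarrow> 'a \<Rightarrow> 'a skp" where
  "sklin x y = (\<lambda>p. if p = (1,0) then x else if p = (0,1) then y else 0)"

text \<open>2x2 matrices (a,b,c,d) = [[a,b],[c,d]].\<close>
type_synonym 'a mat2 = "'a \<times> 'a \<times> 'a \<times> 'a"

definition mmul :: "'a::comm_ring_1 mat2 \<Rightarrow> 'a mat2 \<Rightarrow> 'a mat2" where
  "mmul M N = (case M of (a,b,c,d) \<Rightarrow> case N of (a',b',c',d') \<Rightarrow>
      (a*a'+b*c', a*b'+b*d', c*a'+d*c', c*b'+d*d'))"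

definition mono_img :: "'a::comm_ring_1 mat2 \<Rightarrow> nat \<times> nat \<Rightarrow> 'a skp" where
  "mono_img M q = (case M of (a,b,c,d) \<Rightarrow>
      skmul (skpow (sklin a c) (fst q)) (skpow (sklin b d) (snd q)))"

definition act :: "'a::comm_ring_1 mat2 \<Rightarrow> 'a skp \<Rightarrow> 'a skp" where
  "act M f = (\<lambda>p. \<Sum>q\<in>{q. f q \<noteq> 0}. f q * mono_img M q p)"

text \<open>Subgroup generated by two matrices of finite order (monoid closure suffices).\<close>
inductive_set Ggen :: "'a::comm_ring_1 mat2 \<Rightarrow> 'a mat2 \<Rightarrow> 'a mat2 set" for s1 s2 where
  one: "(1,0,0,1) \<in> Ggen s1 s2"
| step1: "g \<in> Ggen s1 s2 \<Longrightarrow> mmul g s1 \<in> Ggen s1 s2"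
| step2: "g \<in> Ggen s1 s2 \<Longrightarrow> mmul g s2 \<in> Ggen s1 s2"

definition Gnk :: "'a::field \<Rightarrow> nat \<Rightarrow> nat \<Rightarrow> 'a mat2 set" where
  "Gnk \<omega> n k = Ggen (\<omega>^(2*k), 0, 0, inverse (\<omega>^(2*k))) (0, \<omega>^n, \<omega>^n, 0)"

definition invariants :: "'a::comm_ring_1 mat2 set \<Rightarrow> 'a skp set" where
  "invariants G = {f \<in> skA. \<forall>g\<in>G. act g f = f}"

definition sk_commutative :: "'a::comm_ring_1 skp set \<Rightarrow> bool" where
  "sk_commutative S = (\<forall>f\<in>S. \<forall>g\<in>S. skmul f g = skmul g f)"

end

theory Submission
  imports Defs
begin

definition sc :: "'a::comm_ring_1 \<Rightarrow> nat \<times> nat \<Rightarrow> 'a skp" where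
  "sc v a = (\<lambda>p. if p = a then v else 0)"

lemma skmul_sc:
  "skmul (sc \<alpha> a) (sc \<beta> b) = sc (\<alpha>*\<beta>*(-1)^(snd a * fst b)) (fst a + fst b, snd a + snd b)"
proof (rule ext)
  fix p :: "nat \<times> nat"
  let ?B = "{0..fst p} \<times> {0..snd p}"
  have "skmul (sc \<alpha> a) (sc \<beta> b) p = (\<Sum>q\<in>?B. if q = a then (-1)^(snd a * (fst p - fst a)) * \<alpha> * (if (fst p - fst a, snd p - snd a) = b then \<beta> else 0) else 0)"
    unfolding skmul_def sc_def by (rule sum.cong) auto
  also have "\<dots> = (if a \<in> ?B then (-1)^(snd a * (fst p - fst a)) * \<alpha> * (if (fst p - fst a, snd p - snd a) = b then \<beta> else 0) else 0)"
    by simp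
  also have "\<dots> = sc (\<alpha>*\<beta>*(-1)^(snd a * fst b)) (fst a + fst b, snd a + snd b) p"
    by (cases a, cases b, cases p) (auto simp: sc_def)
  finally show "skmul (sc \<alpha> a) (sc \<beta> b) p = sc (\<alpha>*\<beta>*(-1)^(snd a * fst b)) (fst a + fst b, snd a + snd b) p" .
qed

lemma skpow_Suc: "skpow f (Suc m) = skmul f (skpow f m)"
  unfolding skpow_def by simp

lemma skpow_0: "skpow f 0 = sc 1 (0,0)"
  unfolding skpow_def skone_def sc_def by simp

lemma skpow_u: "skpow (sc \<alpha> (Suc 0,0)) m = sc (\<alpha>^m) (m,0)"
  by (induction m) (simp_all only: skpow_Suc skmul_sc skpow_0, simp_all)

lemma skpow_v: "skpow (sc \<alpha> (0,Suc 0)) m = sc (\<alpha>^m) (0,m)"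
  by (induction m) (simp_all only: skpow_Suc skmul_sc skpow_0, simp_all)

lemma sklin_u: "sklin x 0 = sc x (Suc 0,0)" by (auto simp: sklin_def sc_def)
lemma sklin_v: "sklin 0 y = sc y (0,Suc 0)" by (auto simp: sklin_def sc_def)

lemma mono_diag: "mono_img (x,0,0,y) q = sc (x^fst q * y^snd q) q"
  by (simp add: mono_img_def sklin_u sklin_v skpow_u skpow_v skmul_sc)

lemma mono_anti: "mono_img (0,b,c,0) q = sc (c^fst q * b^snd q * (-1)^(fst q * snd q)) (snd q, fst q)"
  by (simp add: mono_img_def sklin_u sklin_v skpow_u skpow_v skmul_sc)

lemma act_diag:
  assumes "f \<in> skA"
  shows "act (x,0,0,y) f = (\<lambda>p. f p * x^fst p * y^snd p)"
proof (rule ext)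
  fix p
  let ?S = "{q. f q \<noteq> 0}"
  have fin: "finite ?S" using assms by (simp add: skA_def)
  have "act (x,0,0,y) f p = (\<Sum>q\<in>?S. if q = p then f p * x^fst p * y^snd p else 0)"
    unfolding act_def mono_diag sc_def by (rule sum.cong) (auto simp: algebra_simps)
  also have "\<dots> = f p * x^fst p * y^snd p" using fin by auto
  finally show "act (x,0,0,y) f p = f p * x^fst p * y^snd p" .
qed

lemma act_anti:
  assumes "f \<in> skA"
  shows "act (0,b,c,0) f = (\<lambda>p. f (snd p, fst p) * c^snd p * b^fst p * (-1)^(snd p * fst p))"
proof (rule ext)
  fix p :: "nat \<times> nat"
  let ?S = "{q. f q \<noteq> 0}"
  have fin: "finite ?S" using assms by (simp add: skA_def)
  have "act (0,b,c,0) f p = (\<Sum>q\<in>?S. if q = (snd p, fst p) then f (snd p, fst p) * c^snd p * b^fst p * (-1)^(snd p * fst p) else 0)"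
    unfolding act_def mono_anti sc_def by (rule sum.cong) (auto simp: algebra_simps)
  also have "\<dots> = f (snd p, fst p) * c^snd p * b^fst p * (-1)^(snd p * fst p)" using fin by auto
  finally show "act (0,b,c,0) f p = f (snd p, fst p) * c^snd p * b^fst p * (-1)^(snd p * fst p)" .
qed

lemma sk_comm:
  fixes f g :: "'a::comm_ring_1 skp"
  assumes f: "\<And>p. f p \<noteq> 0 \<Longrightarrow> even (fst p + snd p)"
    and g: "\<And>p. g p \<noteq> 0 \<Longrightarrow> even (fst p + snd p)"
  shows "skmul f g = skmul g f"
proof (rule ext)
  fix p :: "nat \<times> nat"
  let ?B = "{0..fst p} \<times> {0..snd p}"
  let ?j = "\<lambda>q::nat\<times>nat. (fst p - fst q, snd p - snd q)"
  show "skmul f g p = skmul g f p"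
    unfolding skmul_def
  proof (rule sum.reindex_bij_witness[where i = ?j and j = ?j])
    fix q assume q: "q \<in> ?B"
    show "?j (?j q) = q" using q by (cases q) auto
    show "?j q \<in> ?B" using q by auto
    show "(-1) ^ (snd (?j q) * (fst p - fst (?j q))) * g (?j q) * f (fst p - fst (?j q), snd p - snd (?j q))
        = (-1) ^ (snd q * (fst p - fst q)) * f q * g (fst p - fst q, snd p - snd q)"
    proof (cases "f q = 0 \<or> g (?j q) = 0")
      case True then show ?thesis using q by (cases q) auto
    next
      case False
      then have e1: "even (fst q + snd q)" and e2: "even ((fst p - fst q) + (snd p - snd q))"
        using f[of q] g[of "?j q"] False by auto
      have par: "even (d * a) = even (b * c)" if "even (a+b)" "even (c+d)" for a b c d :: nat
        using that by (auto simp: even_mult_iff)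
      have "(-1::'a) ^ ((snd p - snd q) * fst q) = (-1) ^ (snd q * (fst p - fst q))"
        using par[OF e1 e2] by (simp add: minus_one_power_iff)
      then show ?thesis using q by (cases q) (auto simp: algebra_simps)
    qed
  next
    fix q assume q: "q \<in> ?B"
    show "?j (?j q) = q" using q by (cases q) auto
    show "?j q \<in> ?B" using q by auto
  qed
qed


lemma pow_mod_one:
  fixes x :: "'a::monoid_mult"
  assumes "x^n = 1" shows "x^m = x^(m mod n)"
proof -
  have "x^(n*(m div n) + m mod n) = (x^n)^(m div n) * x^(m mod n)" by (simp only: power_add power_mult)
  then show ?thesis using assms by (simp add: mult_div_mod_eq)
qed

lemma xi_fact:
  fixes \<xi> :: "'a::field"
  assumes "\<xi>^n = 1" "\<xi> \<noteq> 0" "i mod n = j mod n"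
  shows "\<xi>^i * inverse \<xi> ^ j = 1"
proof -
  have "\<xi>^i = \<xi>^(i mod n)" "\<xi>^j = \<xi>^(j mod n)" using pow_mod_one assms(1) by metis+
  then show ?thesis using assms by (simp add: power_inverse)
qed

lemma w_fact:
  fixes \<omega> :: "'a::field"
  assumes "\<omega>^(2*n*k) = 1" "k dvd (i+j)"
  shows "\<omega>^(n*(i+j)) * \<omega>^(n*(i+j)) = 1"
proof -
  obtain t where t: "i + j = k*t" using assms(2) by blast
  have ex: "n*(i+j) + n*(i+j) = 2*n*k*t" using t by simp
  have "\<omega>^(n*(i+j)) * \<omega>^(n*(i+j)) = (\<omega>^(2*n*k))^t"
    by (simp only: ex flip: power_add power_mult)
  then show ?thesis using assms(1) by simp
qed

lemma Ggen_shape: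
  fixes \<omega> \<xi> :: "'a::field"
  assumes w1: "\<omega>^(2*n*k) = 1" and x1: "\<xi>^n = 1" and x0: "\<xi> \<noteq> 0"
    and M: "M \<in> Ggen (\<xi>,0,0,inverse \<xi>) (0,\<omega>^n,\<omega>^n,0)"
  shows "(\<exists>x y. M = (x,0,0,y) \<and> (\<forall>i j. i mod n = j mod n \<and> k dvd (i+j) \<longrightarrow> x^i*y^j = 1))
       \<or> (\<exists>b c. M = (0,b,c,0) \<and> (\<forall>i j. i mod n = j mod n \<and> k dvd (i+j) \<longrightarrow> c^i*b^j = \<omega>^(n*(i+j))))"
  using M
proof induct
  case one then show ?case by simp
next
  case (step1 g)
  from step1(2) show ?case
  proof
    assume "\<exists>x y. g = (x,0,0,y) \<and> (\<forall>i j. i mod n = j mod n \<and> k dvd (i+j) \<longrightarrow> x^i*y^j = 1)"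
    then obtain x y where g: "g = (x,0,0,y)" and h: "\<forall>i j. i mod n = j mod n \<and> k dvd (i+j) \<longrightarrow> x^i*y^j = 1" by blast
    have e: "mmul g (\<xi>,0,0,inverse \<xi>) = (x*\<xi>,0,0,y*inverse \<xi>)" by (simp add: g mmul_def)
    have "\<forall>i j. i mod n = j mod n \<and> k dvd (i+j) \<longrightarrow> (x*\<xi>)^i*(y*inverse \<xi>)^j = 1"
    proof (intro allI impI)
      fix i j assume a: "i mod n = j mod n \<and> k dvd (i+j)"
      have "(x*\<xi>)^i*(y*inverse \<xi>)^j = (x^i*y^j) * (\<xi>^i * inverse \<xi> ^ j)"
        by (simp add: power_mult_distrib algebra_simps)
      also have "\<dots> = 1" using h a xi_fact[OF x1 x0] by simp
      finally show "(x*\<xi>)^i*(y*inverse \<xi>)^j = 1" .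
    qed
    then show ?case using e by blast
  next
    assume "\<exists>b c. g = (0,b,c,0) \<and> (\<forall>i j. i mod n = j mod n \<and> k dvd (i+j) \<longrightarrow> c^i*b^j = \<omega>^(n*(i+j)))"
    then obtain b c where g: "g = (0,b,c,0)" and h: "\<forall>i j. i mod n = j mod n \<and> k dvd (i+j) \<longrightarrow> c^i*b^j = \<omega>^(n*(i+j))" by blast
    have e: "mmul g (\<xi>,0,0,inverse \<xi>) = (0,b*inverse \<xi>,c*\<xi>,0)" by (simp add: g mmul_def)
    have "\<forall>i j. i mod n = j mod n \<and> k dvd (i+j) \<longrightarrow> (c*\<xi>)^i*(b*inverse \<xi>)^j = \<omega>^(n*(i+j))"
    proof (intro allI impI)
      fix i j assume a: "i mod n = j mod n \<and> k dvd (i+j)"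
      have "(c*\<xi>)^i*(b*inverse \<xi>)^j = (c^i*b^j) * (\<xi>^i * inverse \<xi> ^ j)"
        by (simp add: power_mult_distrib algebra_simps)
      also have "\<dots> = \<omega>^(n*(i+j))" using h a xi_fact[OF x1 x0] by simp
      finally show "(c*\<xi>)^i*(b*inverse \<xi>)^j = \<omega>^(n*(i+j))" .
    qed
    then show ?case using e by blast
  qed
next
  case (step2 g)
  from step2(2) show ?case
  proof
    assume "\<exists>x y. g = (x,0,0,y) \<and> (\<forall>i j. i mod n = j mod n \<and> k dvd (i+j) \<longrightarrow> x^i*y^j = 1)"
    then obtain x y where g: "g = (x,0,0,y)" and h: "\<forall>i j. i mod n = j mod n \<and> k dvd (i+j) \<longrightarrow> x^i*y^j = 1" by blast
    have e: "mmul g (0,\<omega>^n,\<omega>^n,0) = (0,x*\<omega>^n,y*\<omega>^n,0)" by (simp add: g mmul_def)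
    have "\<forall>i j. i mod n = j mod n \<and> k dvd (i+j) \<longrightarrow> (y*\<omega>^n)^i*(x*\<omega>^n)^j = \<omega>^(n*(i+j))"
    proof (intro allI impI)
      fix i j assume a: "i mod n = j mod n \<and> k dvd (i+j)"
      have a': "j mod n = i mod n \<and> k dvd (j+i)" using a by (simp add: add.commute)
      have "(y*\<omega>^n)^i*(x*\<omega>^n)^j = (x^j*y^i) * \<omega>^(n*(i+j))"
        by (simp add: power_mult_distrib algebra_simps power_add flip: power_mult)
      also have "\<dots> = \<omega>^(n*(i+j))" using h a' by simp
      finally show "(y*\<omega>^n)^i*(x*\<omega>^n)^j = \<omega>^(n*(i+j))" .
    qed
    then show ?case using e by blast
  next
    assume "\<exists>b c. g = (0,b,c,0) \<and> (\<forall>i j. i mod n = j mod n \<and> k dvd (i+j) \<longrightarrow> c^i*b^j = \<omega>^(n*(i+j)))"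
    then obtain b c where g: "g = (0,b,c,0)" and h: "\<forall>i j. i mod n = j mod n \<and> k dvd (i+j) \<longrightarrow> c^i*b^j = \<omega>^(n*(i+j))" by blast
    have e: "mmul g (0,\<omega>^n,\<omega>^n,0) = (b*\<omega>^n,0,0,c*\<omega>^n)" by (simp add: g mmul_def)
    have "\<forall>i j. i mod n = j mod n \<and> k dvd (i+j) \<longrightarrow> (b*\<omega>^n)^i*(c*\<omega>^n)^j = 1"
    proof (intro allI impI)
      fix i j assume a: "i mod n = j mod n \<and> k dvd (i+j)"
      have a': "j mod n = i mod n \<and> k dvd (j+i)" using a by (simp add: add.commute)
      have "(b*\<omega>^n)^i*(c*\<omega>^n)^j = (c^j*b^i) * \<omega>^(n*(i+j))"
        by (simp add: power_mult_distrib algebra_simps power_add flip: power_mult)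
      also have "\<dots> = \<omega>^(n*(i+j)) * \<omega>^(n*(i+j))" using h a' by (simp add: add.commute)
      also have "\<dots> = 1" using w_fact[OF w1] a by simp
      finally show "(b*\<omega>^n)^i*(c*\<omega>^n)^j = 1" .
    qed
    then show ?case using e by blast
  qed
qed


lemma inv_crit:
  fixes \<omega> :: "'a::field" and f :: "'a skp"
  assumes w1: "\<omega>^(2*n*k) = 1" and w0: "\<omega> \<noteq> 0" and fA: "f \<in> skA"
    and supp: "\<And>p. f p \<noteq> 0 \<Longrightarrow> fst p mod n = snd p mod n \<and> k dvd (fst p + snd p)"
    and tw: "\<And>i j. f (j,i) * \<omega>^(n*(i+j)) * (-1)^(i*j) = f (i,j)"
  shows "f \<in> invariants (Gnk \<omega> n k)"
  unfolding invariants_def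
proof (intro CollectI conjI ballI fA)
  fix M assume "M \<in> Gnk \<omega> n k"
  then have M: "M \<in> Ggen (\<omega>^(2*k),0,0,inverse (\<omega>^(2*k))) (0,\<omega>^n,\<omega>^n,0)" by (simp add: Gnk_def)
  have x1: "(\<omega>^(2*k))^n = 1" using w1 by (simp flip: power_mult add: algebra_simps)
  have x0: "\<omega>^(2*k) \<noteq> 0" using w0 by simp
  from Ggen_shape[OF w1 x1 x0 M] show "act M f = f"
  proof
    assume "\<exists>x y. M = (x,0,0,y) \<and> (\<forall>i j. i mod n = j mod n \<and> k dvd (i+j) \<longrightarrow> x^i*y^j = 1)"
    then obtain x y where g: "M = (x,0,0,y)" and h: "\<forall>i j. i mod n = j mod n \<and> k dvd (i+j) \<longrightarrow> x^i*y^j = 1" by blast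
    show ?thesis
    proof (rule ext)
      fix p :: "nat \<times> nat"
      show "act M f p = f p"
      proof (cases "f p = 0")
        case True then show ?thesis by (simp add: g act_diag[OF fA])
      next
        case False
        then have "x^fst p * y^snd p = 1" using h supp by blast
        then show ?thesis by (simp add: g act_diag[OF fA] mult.assoc)
      qed
    qed
  next
    assume "\<exists>b c. M = (0,b,c,0) \<and> (\<forall>i j. i mod n = j mod n \<and> k dvd (i+j) \<longrightarrow> c^i*b^j = \<omega>^(n*(i+j)))"
    then obtain b c where g: "M = (0,b,c,0)" and h: "\<forall>i j. i mod n = j mod n \<and> k dvd (i+j) \<longrightarrow> c^i*b^j = \<omega>^(n*(i+j))" by blast
    show ?thesis
    proof (rule ext)
      fix p :: "nat \<times> nat"
      obtain i j where p: "p = (i,j)" by (cases p)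
      show "act M f p = f p"
      proof (cases "f (j,i) = 0")
        case True
        then have "f p = 0" using tw[of i j] p w0 by simp
        then show ?thesis using True by (simp add: g act_anti[OF fA] p)
      next
        case False
        then have "c^j * b^i = \<omega>^(n*(j+i))" using h supp[of "(j,i)"] by auto
        then have "act M f p = f (j,i) * \<omega>^(n*(i+j)) * (-1)^(i*j)"
          by (simp add: g act_anti[OF fA] p mult.assoc add.commute mult.commute)
        then show ?thesis using tw[of j i] p by simp
      qed
    qed
  qed
qed

lemma w_ord:
  fixes \<omega> :: "'a::field"
  assumes w1: "\<omega>^N = 1" and prim: "\<forall>m. 0 < m \<and> m < N \<longrightarrow> \<omega> ^ m \<noteq> 1" and N: "N > 0"
    and e: "\<omega>^m = 1"
  shows "N dvd m"
proof -
  have "\<omega>^(m mod N) = 1" using pow_mod_one[OF w1, of m] e by simp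
  moreover have "m mod N < N" using N by simp
  ultimately have "m mod N = 0" using prim by (metis neq0_conv)
  then show ?thesis by (simp add: dvd_eq_mod_eq_0)
qed

lemma w_eq:
  fixes \<omega> :: "'a::field"
  assumes "\<omega> \<noteq> 0" "\<omega>^a = \<omega>^b" "b \<le> a"
  shows "\<omega>^(a-b) = 1"
proof -
  have "\<omega>^a = \<omega>^(a-b) * \<omega>^b" using assms(3) by (simp flip: power_add)
  then show ?thesis using assms by simp
qed

lemma skmul_addL: "skmul (\<lambda>p. f p + g p) h = (\<lambda>p. skmul f h p + skmul g h p)"
  unfolding skmul_def by (auto simp: algebra_simps sum.distrib)

lemma skmul_addR: "skmul h (\<lambda>p. f p + g p) = (\<lambda>p. skmul h f p + skmul h g p)"
  unfolding skmul_def by (auto simp: algebra_simps sum.distrib)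

lemma sc_skA: "(\<lambda>p. sc x a p + sc y b p) \<in> skA"
proof -
  have "{p. sc x a p + sc y b p \<noteq> 0} \<subseteq> {a,b}" by (auto simp: sc_def)
  then show ?thesis unfolding skA_def by (auto intro: finite_subset)
qed


lemma xi_eq:
  fixes \<xi> :: "'a::field"
  shows "\<xi> \<noteq> 0 \<Longrightarrow> \<xi>^x * inverse \<xi> ^ y = 1 \<Longrightarrow> \<xi>^x = \<xi>^y"
  by (simp add: power_inverse field_simps)

lemma inv_parity:
  fixes \<omega> :: "'a::field"
  assumes w1: "\<omega>^(2*n*k) = 1" and prim: "\<forall>m. 0 < m \<and> m < 2*n*k \<longrightarrow> \<omega> ^ m \<noteq> 1"
    and n0: "n > 0" and k0: "k > 0" and w0: "\<omega> \<noteq> 0"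
    and ev: "even n \<or> even k"
    and f: "f \<in> invariants (Gnk \<omega> n k)" and fp: "f p \<noteq> 0"
  shows "even (fst p + snd p)"
proof -
  have fA: "f \<in> skA" and fi: "\<And>g. g \<in> Gnk \<omega> n k \<Longrightarrow> act g f = f"
    using f by (auto simp: invariants_def)
  have N: "2*n*k > 0" using n0 k0 by simp
  obtain x y where p: "p = (x,y)" by (cases p)
  from ev show ?thesis
  proof
    assume en: "even n"
    have "mmul (1,0,0,1) (\<omega>^(2*k),0,0,inverse (\<omega>^(2*k))) \<in> Gnk \<omega> n k"
      unfolding Gnk_def by (rule Ggen.step1[OF Ggen.one])
    then have "(\<omega>^(2*k),0,0,inverse (\<omega>^(2*k))) \<in> Gnk \<omega> n k" by (simp add: mmul_def)
    from fi[OF this] have "act (\<omega>^(2*k),0,0,inverse (\<omega>^(2*k))) f p = f p" by simp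
    then have "f p * ((\<omega>^(2*k))^x * inverse (\<omega>^(2*k))^y) = f p * 1"
      by (simp add: act_diag[OF fA] p mult.assoc)
    then have "(\<omega>^(2*k))^x * inverse (\<omega>^(2*k))^y = 1" using fp by (simp only: mult_cancel_left) simp
    then have "(\<omega>^(2*k))^x = (\<omega>^(2*k))^y" by (rule xi_eq[rotated]) (simp add: w0)
    then have eq: "\<omega>^(2*k*x) = \<omega>^(2*k*y)" by (simp only: power_mult)
    have key: "n dvd (a - b)" if "\<omega>^(2*k*a) = \<omega>^(2*k*b)" "b \<le> a" for a b
    proof -
      have "\<omega>^(2*k*a - 2*k*b) = 1" using w_eq[OF w0 that(1)] that(2) by simp
      then have "2*n*k dvd (2*k*a - 2*k*b)" by (rule w_ord[OF w1 prim N])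
      moreover have "2*k*a - 2*k*b = (2*k)*(a - b)" by (simp add: diff_mult_distrib2)
      moreover have "2*n*k = (2*k)*n" by simp
      ultimately have "(2*k)*n dvd (2*k)*(a - b)" by metis
      then show ?thesis using k0 by (subst (asm) nat_mult_dvd_cancel1) simp_all
    qed
    show ?thesis
    proof (cases "y \<le> x")
      case True
      then have "n dvd x - y" by (rule key[OF eq])
      then have "even (x - y)" using dvd_trans[of 2 n "x-y"] en by simp
      moreover have "x + y = (x - y) + 2*y" using True by simp
      ultimately show ?thesis using p by simp
    next
      case False
      then have "n dvd y - x" by (intro key[OF eq[symmetric]]) simp
      then have "even (y - x)" using dvd_trans[of 2 n "y-x"] en by simp
      moreover have "x + y = (y - x) + 2*x" using False by simp
      ultimately show ?thesis using p by simp
    qed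
  next
    assume ek: "even k"
    have "mmul (mmul (1,0,0,1) (0,\<omega>^n,\<omega>^n,0)) (0,\<omega>^n,\<omega>^n,0) \<in> Gnk \<omega> n k"
      unfolding Gnk_def by (rule Ggen.step2[OF Ggen.step2[OF Ggen.one]])
    moreover have "mmul (mmul (1,0,0,1) (0,\<omega>^n,\<omega>^n,0)) (0,\<omega>^n,\<omega>^n,0) = (\<omega>^(2*n),0,0,\<omega>^(2*n))"
      by (simp add: mmul_def mult_2 power_add)
    ultimately have "(\<omega>^(2*n),0,0,\<omega>^(2*n)) \<in> Gnk \<omega> n k" by simp
    from fi[OF this] have "act (\<omega>^(2*n),0,0,\<omega>^(2*n)) f p = f p" by simp
    then have "f p * ((\<omega>^(2*n))^x * (\<omega>^(2*n))^y) = f p * 1"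
      by (simp add: act_diag[OF fA] p mult.assoc)
    then have "(\<omega>^(2*n))^x * (\<omega>^(2*n))^y = 1" using fp by (simp only: mult_cancel_left) simp
    then have "\<omega>^(2*n*(x+y)) = 1" by (simp add: power_add power_mult)
    then have "2*n*k dvd 2*n*(x+y)" by (rule w_ord[OF w1 prim N])
    then have "k dvd x + y" using n0 by (simp add: mult.assoc)
    then show ?thesis using dvd_trans[of 2 k "x+y"] ek p by simp
  qed
qed

theorem mainTheorem8:
  fixes \<omega> :: "'a::field_char_0" and n k :: nat
  assumes alg_closed: "\<forall>p :: 'a poly. degree p > 0 \<longrightarrow> (\<exists>x. poly p x = 0)"
    and "n > 0" and "k > 0" and "coprime n k" and "k mod 4 \<noteq> 2"
    and "\<omega> ^ (2*n*k) = 1" and "\<forall>m. 0 < m \<and> m < 2*n*k \<longrightarrow> \<omega> ^ m \<noteq> 1"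
  shows "sk_commutative (invariants (Gnk \<omega> n k)) \<longleftrightarrow> (even n \<or> even k)"
proof -
  note n0 = assms(2) and k0 = assms(3) and w1 = assms(6) and prim = assms(7)
  have N: "2*n*k > 0" using n0 k0 by simp
  have w0: "\<omega> \<noteq> 0" using w1 N by (metis power_0_left less_not_refl zero_neq_one)
  show ?thesis
  proof
    assume comm: "sk_commutative (invariants (Gnk \<omega> n k))"
    show "even n \<or> even k"
    proof (rule ccontr)
      assume "\<not> (even n \<or> even k)"
      then have on: "odd n" and ok: "odd k" by auto
      define a where "a = n*k"
      define c where "c = n*(2*k+1)"
      define d where "d = n*(2*k-1)"
      have a0: "a > 0" using n0 k0 by (simp add: a_def)
      have oa: "odd a" using on ok by (simp add: a_def)
      have oc: "odd c" using on by (simp add: c_def)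
      have od: "odd d" using on k0 by (simp add: d_def)
      have "2*k-1 < 2*k+1" by simp
      then have dc: "d < c" using n0 unfolding c_def d_def by (rule mult_strict_left_mono)
      have cd4: "c + d = 4*n*k" using k0 by (simp add: c_def d_def algebra_simps)
      have a2: "a*2 = 2*n*k" by (simp add: a_def)
      have wa2: "(\<omega>^a)^2 = 1" using w1 by (simp only: a2 flip: power_mult)
      have "0 < a \<and> a < 2*n*k" using a0 by (simp add: a_def)
      then have wa_ne: "\<omega>^a \<noteq> 1" using prim by blast
      have "(\<omega>^a - 1) * (\<omega>^a + 1) = 0" using wa2 by (simp add: algebra_simps power2_eq_square)
      then have wa: "\<omega>^a = -1" using wa_ne by (simp add: eq_neg_iff_add_eq_0)
      have wna: "\<omega>^(n*a) = -1" using wa on by (simp add: mult.commute power_mult)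
      have wcd: "\<omega>^(n*(c+d)) = 1"
      proof -
        have "\<omega>^(n*(c+d)) = (\<omega>^(2*n*k))^(2*n)" unfolding cd4 by (simp flip: power_mult add: algebra_simps)
        then show ?thesis using w1 by simp
      qed
      have wdc: "\<omega>^(n*(d+c)) = 1" using wcd by (simp add: add.commute)
      have s1: "(-1::'a)^(c*d) = -1" "(-1::'a)^(d*c) = -1" "(-1::'a)^(d*a) = -1"
        using oc od oa by (simp_all add: minus_one_power_iff)
      define F where "F = (\<lambda>p. sc (1::'a) (a,0) p + sc (-1) (0,a) p)"
      define Gf where "Gf = (\<lambda>p. sc (1::'a) (c,d) p + sc (-1) (d,c) p)"
      have FI: "F \<in> invariants (Gnk \<omega> n k)"
      proof (rule inv_crit[OF w1 w0])
        show "F \<in> skA" unfolding F_def by (rule sc_skA)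
        fix p assume "F p \<noteq> 0"
        then have "p = (a,0) \<or> p = (0,a)" by (auto simp: F_def sc_def split: if_splits)
        then show "fst p mod n = snd p mod n \<and> k dvd (fst p + snd p)" by (auto simp: a_def)
      next
        fix i j
        show "F (j,i) * \<omega>^(n*(i+j)) * (-1)^(i*j) = F (i,j)"
          using a0 wna by (auto simp: F_def sc_def)
      qed
      have GI: "Gf \<in> invariants (Gnk \<omega> n k)"
      proof (rule inv_crit[OF w1 w0])
        show "Gf \<in> skA" unfolding Gf_def by (rule sc_skA)
        fix p assume "Gf p \<noteq> 0"
        then have "p = (c,d) \<or> p = (d,c)" by (auto simp: Gf_def sc_def split: if_splits)
        moreover have "c mod n = d mod n" by (simp add: c_def d_def)
        moreover have "k dvd (c+d)" "k dvd (d+c)" using cd4 by (simp_all add: add.commute)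
        ultimately show "fst p mod n = snd p mod n \<and> k dvd (fst p + snd p)" by auto
      next
        fix i j
        show "Gf (j,i) * \<omega>^(n*(i+j)) * (-1)^(i*j) = Gf (i,j)"
          using dc wcd wdc s1 by (auto simp: Gf_def sc_def)
      qed
      have "skmul F Gf = skmul Gf F" using comm FI GI by (simp add: sk_commutative_def)
      then have "skmul F Gf (a+c,d) = skmul Gf F (a+c,d)" by simp
      moreover have "skmul F Gf (a+c,d) = 1"
        unfolding F_def Gf_def using dc a0 by (simp only: skmul_addL skmul_addR skmul_sc) (simp add: sc_def)
      moreover have "skmul Gf F (a+c,d) = -1"
        unfolding F_def Gf_def using dc a0 s1 by (simp only: skmul_addL skmul_addR skmul_sc) (simp add: sc_def add.commute[of c a])
      ultimately show False by simp
    qed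
  next
    assume ev: "even n \<or> even k"
    show "sk_commutative (invariants (Gnk \<omega> n k))"
      unfolding sk_commutative_def
    proof (intro ballI)
      fix f g assume f: "f \<in> invariants (Gnk \<omega> n k)" and g: "g \<in> invariants (Gnk \<omega> n k)"
      show "skmul f g = skmul g f"
        by (rule sk_comm[OF inv_parity[OF w1 prim n0 k0 w0 ev f] inv_parity[OF w1 prim n0 k0 w0 ev g]])
    qed
  qed
qed

end
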